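(* Let $s\in(0,1)$, let $a$ be a spectral measure on $\mathbb S^{n-1}$, let $\Omega\subset\mathbb R^n$ be open and $u\in C^2(\Omega)\cap L^\infty(\mathbb R^n)$. Then for every $x\in\Omega$, $$u(x)=\mathscr M^s_r u(x)+c(n,s,a)\,r^{2s}\,\mathcal L u(x)+\mathcal O(r^2)\qquad\text{as } r\to0.$$
   Context: A spectral measure is a non-negative finite Borel measure $a$ on $\mathbb S^{n-1}$ with $0<\int_{\mathbb S^{n-1}}da\le\Lambda$ for some $\Lambda>0$. With $\delta(u,x,y)=2u(x)-u(x-y)-u(x+y)$: $$\mathcal L u(x)=\int_0^\infty d\rho\int_{\mathbb S^{n-1}}da(\omega)\,\frac{\delta(u,x,\rho\omega)}{\rho^{1+2s}},\qquad \mathscr M^s_r u(x)=c(n,s,a)\,r^{2s}\int_r^\infty d\rho\int_{\mathbb S^{n-1}}da(\omega)\,\frac{u(x+\rho\omega)+u(x-\rho\omega)}{(\rho^2-r^2)^s\rho},$$ with $c(n,s,a)=\frac{\sin\pi s}{\pi}\big(\int_{\mathbb S^{n-1}}da\big)^{-1}$. *)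

theory Defs
  imports "HOL-Analysis.Analysis" "HOL-Library.Landau_Symbols"
begin

definition spectral_measure :: "'a::euclidean_space measure \<Rightarrow> bool" where
  "spectral_measure a \<longleftrightarrow>
     sets a = sets (restrict_space borel (sphere (0::'a) 1)) \<and>
     finite_measure a \<and> 0 < emeasure a (space a)"

definition C2_on :: "'a::euclidean_space set \<Rightarrow> ('a \<Rightarrow> real) \<Rightarrow> bool" where
  "C2_on S u \<longleftrightarrow>
     (\<exists>(Du :: 'a \<Rightarrow> ('a \<Rightarrow>\<^sub>L real)) (D2u :: 'a \<Rightarrow> ('a \<Rightarrow>\<^sub>L ('a \<Rightarrow>\<^sub>L real))).
        (\<forall>x\<in>S. (u has_derivative blinfun_apply (Du x)) (at x)) \<and>
        (\<forall>x\<in>S. (Du has_derivative blinfun_apply (D2u x)) (at x)) \<and>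
        continuous_on S D2u)"

definition delta_u :: "('a::euclidean_space \<Rightarrow> real) \<Rightarrow> 'a \<Rightarrow> 'a \<Rightarrow> real" where
  "delta_u u x y = 2 * u x - u (x - y) - u (x + y)"

definition cnsa :: "real \<Rightarrow> 'a::euclidean_space measure \<Rightarrow> real" where
  "cnsa s a = sin (pi * s) / pi / measure a (space a)"

definition Lop :: "real \<Rightarrow> 'a::euclidean_space measure \<Rightarrow> ('a \<Rightarrow> real) \<Rightarrow> 'a \<Rightarrow> real" where
  "Lop s a u x =
     (LINT \<rho>:{0<..}|lborel. (\<integral>\<omega>. delta_u u x (\<rho> *\<^sub>R \<omega>) / \<rho> powr (1 + 2 * s) \<partial>a))"

definition Mop :: "real \<Rightarrow> 'a::euclidean_space measure \<Rightarrow> real \<Rightarrow> ('a \<Rightarrow> real) \<Rightarrow> 'a \<Rightarrow> real" where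
  "Mop s a r u x = cnsa s a * r powr (2 * s) *
     (LINT \<rho>:{r<..}|lborel. (\<integral>\<omega>. (u (x + \<rho> *\<^sub>R \<omega>) + u (x - \<rho> *\<^sub>R \<omega>))
                                   / ((\<rho>\<^sup>2 - r\<^sup>2) powr s * \<rho>) \<partial>a))"

end

theory Submission
  imports Defs
begin


lemma Beta_refl:
  assumes "0 < s" "s < 1"
  shows "Beta (1 - s) s = pi / sin (pi * s)"
proof -
  have "complex_of_real (Gamma s * Gamma (1 - s)) = Gamma (complex_of_real s) * Gamma (1 - complex_of_real s)"
  proof -
    have "1 - complex_of_real s = complex_of_real (1 - s)" by simp
    thus ?thesis by (simp only: Gamma_complex_of_real of_real_mult)
  qed
  also have "\<dots> = of_real pi / sin (of_real pi * of_real s)" by (rule Gamma_reflection_complex)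
  also have "\<dots> = complex_of_real (pi / sin (pi * s))" by (simp flip: sin_of_real)
  finally have "Gamma s * Gamma (1 - s) = pi / sin (pi * s)" using of_real_eq_iff by blast
  thus ?thesis by (simp add: Beta_def mult.commute)
qed

lemma K_integral:
  fixes r s :: real
  assumes s: "0 < s" "s < 1" and r: "r > 0"
  shows "set_integrable lborel {r<..} (\<lambda>\<rho>. 1 / ((\<rho>\<^sup>2 - r\<^sup>2) powr s * \<rho>))"
    "(LINT \<rho>:{r<..}|lborel. 1 / ((\<rho>\<^sup>2 - r\<^sup>2) powr s * \<rho>)) = r powr (- (2 * s)) * pi / (2 * sin (pi * s))"
proof -
  define f where "f = (\<lambda>\<rho>::real. 1 / ((\<rho>\<^sup>2 - r\<^sup>2) powr s * \<rho>))"
  define g where "g = (\<lambda>w::real. r * (1 - w) powr (-1/2))"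
  define g' where "g' = (\<lambda>w::real. r / 2 * (1 - w) powr (-3/2))"
  define h where "h = (\<lambda>w::real. w powr ((1-s) - 1) * (1 - w) powr (s - 1))"
  have key: "f (g w) * g' w = r powr (- (2 * s)) / 2 * h w" if w: "0 < w" "w < 1" for w
  proof -
    define q where "q = 1 - w"
    have q: "0 < q" "q < 1" using w by (auto simp: q_def)
    have "(q powr (-1/2))\<^sup>2 = q powr (-1/2) * q powr (-1/2)" by (simp add: power2_eq_square)
    also have "\<dots> = q powr (-1)" by (simp flip: powr_add)
    also have "\<dots> = 1 / q" using q by (simp add: powr_minus_divide)
    finally have "(g w)\<^sup>2 = r\<^sup>2 / q" by (simp add: g_def q_def[symmetric] power_mult_distrib)
    then have gg: "(g w)\<^sup>2 - r\<^sup>2 = r\<^sup>2 * w / q" using q by (simp add: q_def field_simps)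
    have pos: "r\<^sup>2 * w / q > 0" using r w q by simp
    have l: "ln (r\<^sup>2 * w / q) = 2 * ln r + ln w - ln q" using r w q
      by (simp add: ln_mult ln_div ln_realpow)
    have "f (g w) * g' w = 1 / (exp (s * ln (r\<^sup>2 * w / q)) * (r * exp (-1/2 * ln q))) * (r / 2 * exp (-3/2 * ln q))"
    proof -
      have "f (g w) = 1 / ((r\<^sup>2 * w / q) powr s * g w)" by (simp add: f_def gg)
      thus ?thesis using q r w pos by (simp add: g_def g'_def q_def[symmetric] powr_def)
    qed
    also have "\<dots> = exp (- (2 * s) * ln r) / 2 * (exp ((-s) * ln w) * exp ((s - 1) * ln q))"
      unfolding l using r
      by (simp add: exp_add[symmetric] exp_diff exp_minus algebra_simps divide_simps)
    also have "\<dots> = r powr (- (2 * s)) / 2 * h w" using r w q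
      by (simp add: h_def q_def[symmetric] powr_def)
    finally show ?thesis .
  qed
  have hint: "set_integrable lborel {0..1} h" unfolding h_def
    using integrable_Beta[of "1 - s" s] s by simp
  have hval: "(LINT x:{0..1}|lborel. h x) = pi / sin (pi * s)"
  proof -
    have "(LINT x:{0..1}|lborel. h x) = integral {0..1} h"
      by (rule set_borel_integral_eq_integral(2)[OF hint])
    also have "\<dots> = Beta (1 - s) s" unfolding h_def
      using has_integral_Beta_real[of "1 - s" s] s by (simp add: integral_unique)
    finally show ?thesis using Beta_refl[OF s] by simp
  qed
  have hint': "set_integrable lborel {0<..<1} (\<lambda>x. r powr (- (2 * s)) / 2 * h x)"
    by (rule set_integrable_subset[OF _ _ greaterThanLessThan_subseteq_atLeastAtMost_iff[THEN iffD2]])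
       (use hint in auto)
  have fgint: "set_integrable lborel (einterval (ereal 0) (ereal 1)) (\<lambda>x. f (g x) * g' x)"
    unfolding einterval_eq_Icc by (subst set_integrable_cong[OF refl refl key]) (use hint' in auto)
  have dg: "DERIV g x :> g' x" if "0 < x" "x < 1" for x
    using that unfolding g_def g'_def
    by (auto intro!: derivative_eq_intros simp: field_simps powr_diff)
  have cf: "isCont f (g x)" if "0 < x" "x < 1" for x
  proof -
    have "(1 - x) powr (1/2) < 1 powr (1/2)" using that by (intro powr_less_mono2) auto
    then have "(1 - x) powr (-1/2) > 1" using that
      by (simp add: powr_minus_divide powr_minus)
    then have "g x > r" using r unfolding g_def by simp
    then have "(g x)\<^sup>2 - r\<^sup>2 > 0" using r by (simp add: power_strict_mono)
    then show ?thesis using \<open>g x > r\<close> r unfolding f_def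
      by (intro continuous_intros) auto
  qed
  have gA: "((ereal \<circ> g \<circ> real_of_ereal) \<longlongrightarrow> ereal r) (at_right (ereal 0))"
    unfolding ereal_tendsto_simps g_def
    by (rule tendsto_eq_intros refl | simp)+
  have gB: "((ereal \<circ> g \<circ> real_of_ereal) \<longlongrightarrow> \<infinity>) (at_left (ereal 1))"
    unfolding ereal_tendsto_simps g_def using r by real_asymp
  have cg': "isCont g' x" if "0 < x" "x < 1" for x
    using that unfolding g'_def by (intro continuous_intros) auto
  have fnn: "0 \<le> f (g x)" if "0 < x" "x < 1" for x
  proof -
    have "(1 - x) powr (-1/2) \<ge> 0" by simp
    then have "g x \<ge> 0" using r by (simp add: g_def)
    then show ?thesis unfolding f_def by simp
  qed
  have g'nn: "0 \<le> g' x" for x using r by (simp add: g'_def)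
  have sub: "set_integrable lborel (einterval (ereal r) \<infinity>) f"
     "(LBINT x=ereal r..\<infinity>. f x) = (LBINT x=ereal 0..ereal 1. f (g x) * g' x)"
    by (rule interval_integral_substitution_nonneg[of "ereal 0" "ereal 1" g g' f "ereal r" \<infinity>, OF _ _ _ _ _ _ gA gB fgint];
        simp add: dg cf cg' fnn g'nn)+
  show "set_integrable lborel {r<..} (\<lambda>\<rho>. 1 / ((\<rho>\<^sup>2 - r\<^sup>2) powr s * \<rho>))"
    using sub(1) by (simp add: f_def)
  have "(LINT \<rho>:{r<..}|lborel. 1 / ((\<rho>\<^sup>2 - r\<^sup>2) powr s * \<rho>)) = (LBINT x=ereal r..\<infinity>. f x)"
    by (simp add: interval_integral_Ioi f_def)
  also have "\<dots> = (LBINT x=ereal 0..ereal 1. f (g x) * g' x)"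
    by (rule sub(2))
  also have "\<dots> = (LINT x:{0<..<1}|lborel. f (g x) * g' x)"
    by (simp add: interval_integral_Ioo)
  also have "\<dots> = (LINT x:{0<..<1}|lborel. r powr (- (2 * s)) / 2 * h x)"
    by (rule set_lebesgue_integral_cong) (auto simp: key)
  also have "\<dots> = r powr (- (2 * s)) / 2 * (LBINT x=ereal 0..ereal 1. h x)"
    by (simp add: interval_integral_Ioo)
  also have "\<dots> = r powr (- (2 * s)) / 2 * (LINT x:{0..1}|lborel. h x)"
    by (simp add: interval_integral_Icc)
  finally show "(LINT \<rho>:{r<..}|lborel. 1 / ((\<rho>\<^sup>2 - r\<^sup>2) powr s * \<rho>)) = r powr (- (2 * s)) * pi / (2 * sin (pi * s))"
    by (simp add: hval)
qed



lemma powr_int: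
  fixes s b :: real
  assumes s: "0 < s" "s < 1" and b: "b > 0"
  shows "set_integrable lborel {0<..<b} (\<lambda>\<rho>. \<rho> powr (1 - 2 * s))"
    "(LINT \<rho>:{0<..<b}|lborel. \<rho> powr (1 - 2 * s)) = b powr (2 - 2 * s) / (2 - 2 * s)"
proof -
  define G where "G = (\<lambda>x::real. x powr (2 - 2 * s) / (2 - 2 * s))"
  have d: "DERIV G x :> x powr (1 - 2 * s)" if "0 < x" for x
  proof -
    have "DERIV G x :> (2 - 2 * s) * x powr (2 - 2 * s - 1) / (2 - 2 * s)"
      unfolding G_def using that s by (intro derivative_eq_intros DERIV_powr) auto
    moreover have "(2 - 2 * s) * x powr (2 - 2 * s - 1) / (2 - 2 * s) = x powr (1 - 2 * s)"
      using s by (simp add: divide_simps)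
    ultimately show ?thesis by simp
  qed
  have c: "isCont (\<lambda>x. x powr (1 - 2 * s)) x" if "0 < x" for x
    using that by (intro continuous_intros) auto
  have A: "((G \<circ> real_of_ereal) \<longlongrightarrow> 0) (at_right (ereal 0))"
    unfolding ereal_tendsto_simps G_def using s
    by (intro tendsto_eq_intros tendsto_zero_powrI[where F="at_right 0"])
       (auto intro: tendsto_ident_at eventually_at_right_less[THEN eventually_mono])
  have B: "((G \<circ> real_of_ereal) \<longlongrightarrow> G b) (at_left (ereal b))"
    unfolding ereal_tendsto_simps G_def using b s
    by (intro tendsto_eq_intros tendsto_ident_at) auto
  note ftc = interval_integral_FTC_nonneg[of "ereal 0" "ereal b" G "\<lambda>x. x powr (1 - 2 * s)", OF _ _ _ _ A B]
  show "set_integrable lborel {0<..<b} (\<lambda>\<rho>. \<rho> powr (1 - 2 * s))"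
    using ftc(1) b d c by auto
  have "(LBINT x=ereal 0..ereal b. x powr (1 - 2 * s)) = G b - 0"
    using ftc(2) b d c by auto
  then show "(LINT \<rho>:{0<..<b}|lborel. \<rho> powr (1 - 2 * s)) = b powr (2 - 2 * s) / (2 - 2 * s)"
    using b by (simp add: interval_integral_Ioo G_def)
qed

lemma psi_int:
  fixes s r :: real
  assumes s: "0 < s" "s < 1" and r: "r > 0"
  shows "set_integrable lborel {r<..} (\<lambda>\<rho>. \<rho> * (\<rho>\<^sup>2 - r\<^sup>2) powr (-s) - \<rho> powr (1 - 2 * s))"
    "(LINT \<rho>:{r<..}|lborel. \<rho> * (\<rho>\<^sup>2 - r\<^sup>2) powr (-s) - \<rho> powr (1 - 2 * s)) = r powr (2 - 2 * s) / (2 - 2 * s)"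
proof -
  define G where "G = (\<lambda>x::real. ((x\<^sup>2 - r\<^sup>2) powr (1 - s) - x powr (2 - 2 * s)) / (2 - 2 * s))"
  have d: "DERIV G x :> x * (x\<^sup>2 - r\<^sup>2) powr (-s) - x powr (1 - 2 * s)" if "r < x" for x
  proof -
    have x: "x > 0" "x\<^sup>2 - r\<^sup>2 > 0" using that r by (auto simp: power_strict_mono)
    have "DERIV G x :> ((1 - s) * (x\<^sup>2 - r\<^sup>2) powr (1 - s - 1) * (2 * x) - (2 - 2 * s) * x powr (2 - 2 * s - 1)) / (2 - 2 * s)"
      unfolding G_def using x s by (intro derivative_eq_intros DERIV_powr) auto
    moreover have "((1 - s) * (x\<^sup>2 - r\<^sup>2) powr (1 - s - 1) * (2 * x) - (2 - 2 * s) * x powr (2 - 2 * s - 1)) / (2 - 2 * s)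
       = x * (x\<^sup>2 - r\<^sup>2) powr (-s) - x powr (1 - 2 * s)"
    proof -
      have e1: "1 - s - 1 = -s" "2 - 2 * s - 1 = 1 - 2 * s" by simp_all
      have gen: "((1 - s) * A * (2 * x) - (2 - 2 * s) * C) / (2 - 2 * s) = x * A - C" for A C :: real
        using s by (simp add: field_simps)
      show ?thesis unfolding e1 by (rule gen)
    qed
    ultimately show ?thesis by simp
  qed
  have c: "isCont (\<lambda>x. x * (x\<^sup>2 - r\<^sup>2) powr (-s) - x powr (1 - 2 * s)) x" if "r < x" for x
  proof -
    have x: "x > 0" "x\<^sup>2 - r\<^sup>2 > 0" using that r by (auto simp: power_strict_mono)
    thus ?thesis by (intro continuous_intros) auto
  qed
  have nn: "0 \<le> x * (x\<^sup>2 - r\<^sup>2) powr (-s) - x powr (1 - 2 * s)" if "r < x" for x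
  proof -
    have x: "x > 0" "x\<^sup>2 - r\<^sup>2 > 0" using that r by (auto simp: power_strict_mono)
    have m: "(x\<^sup>2) powr (-s) \<le> (x\<^sup>2 - r\<^sup>2) powr (-s)"
      by (rule powr_mono2') (use x s in auto)
    have "x\<^sup>2 = x powr 2" using x by (simp add: powr_numeral)
    then have "(x\<^sup>2) powr (-s) = x powr (2 * (-s))" by (simp add: powr_powr)
    moreover have "x powr (1 + 2 * (-s)) = x powr 1 * x powr (2 * (-s))" by (rule powr_add)
    ultimately have "x * (x\<^sup>2) powr (-s) = x powr (1 + 2 * (-s))" using x by simp
    then have e: "x * (x\<^sup>2) powr (-s) = x powr (1 - 2 * s)" by simp
    have "x * (x\<^sup>2) powr (-s) \<le> x * (x\<^sup>2 - r\<^sup>2) powr (-s)"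
      using m x by (intro mult_left_mono) auto
    then show ?thesis using e by linarith
  qed
  have A: "((G \<circ> real_of_ereal) \<longlongrightarrow> (0 - r powr (2 - 2 * s)) / (2 - 2 * s)) (at_right (ereal r))"
    unfolding ereal_tendsto_simps G_def using s r
  proof (intro tendsto_intros tendsto_zero_powrI[where F="at_right r" and b="1 - s"])
    show "((\<lambda>x. x\<^sup>2 - r\<^sup>2) \<longlongrightarrow> 0) (at_right r)"
      by (rule tendsto_eq_intros tendsto_ident_at refl | simp)+
    show "\<forall>\<^sub>F x in at_right r. 0 \<le> x\<^sup>2 - r\<^sup>2"
      using eventually_at_right_less[of r] r
      by (auto elim!: eventually_mono intro: power_mono)
  qed (use s r in auto)
  have B: "((G \<circ> real_of_ereal) \<longlongrightarrow> 0) (at_left \<infinity>)"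
    unfolding ereal_tendsto_simps G_def using s r by real_asymp
  note ftc = interval_integral_FTC_nonneg[of "ereal r" "\<infinity>" G, OF _ _ _ _ A B]
  show "set_integrable lborel {r<..} (\<lambda>\<rho>. \<rho> * (\<rho>\<^sup>2 - r\<^sup>2) powr (-s) - \<rho> powr (1 - 2 * s))"
    using ftc(1) d c nn by auto
  have "(LBINT x=ereal r..\<infinity>. x * (x\<^sup>2 - r\<^sup>2) powr (-s) - x powr (1 - 2 * s)) = 0 - (0 - r powr (2 - 2 * s)) / (2 - 2 * s)"
    using ftc(2) d c nn by auto
  then show "(LINT \<rho>:{r<..}|lborel. \<rho> * (\<rho>\<^sup>2 - r\<^sup>2) powr (-s) - \<rho> powr (1 - 2 * s)) = r powr (2 - 2 * s) / (2 - 2 * s)"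
    by (simp add: interval_integral_Ioi)
qed



lemma core:
  fixes F :: "real \<Rightarrow> real" and B B' r s :: real
  assumes Fm: "F \<in> borel_measurable borel"
    and FB: "\<And>\<rho>. \<rho> > 0 \<Longrightarrow> \<bar>F \<rho>\<bar> \<le> B * \<rho>\<^sup>2" and FB': "\<And>\<rho>. \<bar>F \<rho>\<bar> \<le> B'"
    and s: "0 < s" "s < 1" and r: "r > 0"
  shows "set_integrable lborel {r<..} (\<lambda>\<rho>. F \<rho> / ((\<rho>\<^sup>2 - r\<^sup>2) powr s * \<rho>))"
    "set_integrable lborel {0<..} (\<lambda>\<rho>. F \<rho> / \<rho> powr (1 + 2 * s))"
    "\<bar>(LINT \<rho>:{r<..}|lborel. F \<rho> / ((\<rho>\<^sup>2 - r\<^sup>2) powr s * \<rho>))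
       - (LINT \<rho>:{0<..}|lborel. F \<rho> / \<rho> powr (1 + 2 * s))\<bar> \<le> B * r powr (2 - 2 * s) / (1 - s)"
proof -
  define Fr where "Fr = (\<lambda>\<rho>. F \<rho> / ((\<rho>\<^sup>2 - r\<^sup>2) powr s * \<rho>))"
  define F0 where "F0 = (\<lambda>\<rho>. F \<rho> / \<rho> powr (1 + 2 * s))"
  define psi where "psi = (\<lambda>\<rho>. \<rho> * (\<rho>\<^sup>2 - r\<^sup>2) powr (-s) - \<rho> powr (1 - 2 * s))"
  define X where "X = r powr (2 - 2 * s)"
  have [measurable]: "F \<in> borel_measurable lborel" using Fm by simp
  have Frm: "Fr \<in> borel_measurable lborel" unfolding Fr_def by measurable
  have F0m: "F0 \<in> borel_measurable lborel" unfolding F0_def by measurable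
  note K = K_integral[OF s r]
  have I1: "set_integrable lborel {r<..} Fr"
  proof (rule set_integrable_bound[where f="\<lambda>\<rho>. B' * (1 / ((\<rho>\<^sup>2 - r\<^sup>2) powr s * \<rho>))"])
    show "set_integrable lborel {r<..} (\<lambda>\<rho>. B' * (1 / ((\<rho>\<^sup>2 - r\<^sup>2) powr s * \<rho>)))"
      using K(1) by (rule set_integrable_mult_right)
    show "set_borel_measurable lborel {r<..} Fr"
      unfolding set_borel_measurable_def using Frm by measurable
    show "AE x in lborel. x \<in> {r<..} \<longrightarrow> norm (Fr x) \<le> norm (B' * (1 / ((x\<^sup>2 - r\<^sup>2) powr s * x)))"
    proof (rule AE_I2, rule impI)
      fix x assume x: "x \<in> {r<..}"
      have "x\<^sup>2 - r\<^sup>2 > 0" using x r by (auto simp: power_strict_mono)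
      then have D: "(x\<^sup>2 - r\<^sup>2) powr s * x > 0" using x r by auto
      have "\<bar>F x\<bar> / ((x\<^sup>2 - r\<^sup>2) powr s * x) \<le> B' / ((x\<^sup>2 - r\<^sup>2) powr s * x)"
        using FB'[of x] D by (intro divide_right_mono) auto
      moreover have "B' \<ge> 0" using FB'[of x] by linarith
      ultimately show "norm (Fr x) \<le> norm (B' * (1 / ((x\<^sup>2 - r\<^sup>2) powr s * x)))"
        using D x r by (simp add: Fr_def abs_mult abs_divide)
    qed
  qed
  note P = psi_int[OF s r]
  have Dbound: "\<bar>Fr x - F0 x\<bar> \<le> B * psi x" if x: "r < x" for x
  proof -
    have xp: "x > 0" using x r by simp
    have P0: "x\<^sup>2 - r\<^sup>2 > 0" using x r by (auto simp: power_strict_mono)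
    define kr where "kr = 1 / ((x\<^sup>2 - r\<^sup>2) powr s * x)"
    define k0 where "k0 = 1 / x powr (1 + 2 * s)"
    have e1: "x\<^sup>2 * kr = x * (x\<^sup>2 - r\<^sup>2) powr (-s)"
      using P0 xp by (simp add: kr_def powr_minus divide_simps power2_eq_square)
    have "x powr (1 + 2 * s) = x * x powr (2 * s)" using xp by (simp add: powr_add)
    moreover have "x powr (1 - 2 * s) = x / x powr (2 * s)" using xp by (simp add: powr_diff)
    ultimately have e2: "x\<^sup>2 * k0 = x powr (1 - 2 * s)"
      using xp by (simp add: k0_def power2_eq_square)
    have ps: "psi x = x\<^sup>2 * (kr - k0)" unfolding psi_def using e1 e2 by (simp add: algebra_simps)
    have "psi x \<ge> 0"
    proof -
      have nn: "0 \<le> x * (x\<^sup>2 - r\<^sup>2) powr (-s) - x powr (1 - 2 * s)"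
      proof -
        have m: "(x\<^sup>2) powr (-s) \<le> (x\<^sup>2 - r\<^sup>2) powr (-s)"
          by (rule powr_mono2') (use P0 xp s in auto)
        have "x\<^sup>2 = x powr 2" using xp by (simp add: powr_numeral)
        then have "(x\<^sup>2) powr (-s) = x powr (2 * (-s))" by (simp add: powr_powr)
        moreover have "x powr (1 + 2 * (-s)) = x powr 1 * x powr (2 * (-s))" by (rule powr_add)
        ultimately have "x * (x\<^sup>2) powr (-s) = x powr (1 + 2 * (-s))" using xp by simp
        then have e: "x * (x\<^sup>2) powr (-s) = x powr (1 - 2 * s)" by simp
        have "x * (x\<^sup>2) powr (-s) \<le> x * (x\<^sup>2 - r\<^sup>2) powr (-s)"
          using m xp by (intro mult_left_mono) auto
        then show ?thesis using e by linarith
      qed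
      thus ?thesis by (simp add: psi_def)
    qed
    then have kk: "kr - k0 \<ge> 0" using ps xp
      by (metis zero_le_mult_iff zero_less_power not_le)
    have "Fr x - F0 x = F x * (kr - k0)"
      by (simp add: Fr_def F0_def kr_def k0_def algebra_simps)
    then have "\<bar>Fr x - F0 x\<bar> = \<bar>F x\<bar> * (kr - k0)" using kk by (simp add: abs_mult)
    also have "\<dots> \<le> (B * x\<^sup>2) * (kr - k0)" using FB[OF xp] kk by (rule mult_right_mono)
    also have "\<dots> = B * psi x" using ps by simp
    finally show ?thesis .
  qed
  have Bnn: "B \<ge> 0" using FB[of 1] by simp
  have psiint: "set_integrable lborel {r<..} (\<lambda>x. B * psi x)"
    using P(1) unfolding psi_def by (rule set_integrable_mult_right)
  have Dint: "set_integrable lborel {r<..} (\<lambda>x. Fr x - F0 x)"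
  proof (rule set_integrable_bound[OF psiint])
    show "set_borel_measurable lborel {r<..} (\<lambda>x. Fr x - F0 x)"
      unfolding set_borel_measurable_def using Frm F0m by measurable
    show "AE x in lborel. x \<in> {r<..} \<longrightarrow> norm (Fr x - F0 x) \<le> norm (B * psi x)"
      by (rule AE_I2) (auto intro: order.trans[OF Dbound] abs_ge_self)
  qed
  have Dle: "\<bar>LINT x:{r<..}|lborel. Fr x - F0 x\<bar> \<le> B * X / (2 - 2 * s)"
  proof -
    have "(LINT x:{r<..}|lborel. Fr x - F0 x) \<le> (LINT x:{r<..}|lborel. B * psi x)"
      by (rule set_integral_mono[OF Dint psiint]) (use Dbound in fastforce)
    moreover have "(LINT x:{r<..}|lborel. - (Fr x - F0 x)) \<le> (LINT x:{r<..}|lborel. B * psi x)"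
    proof (rule set_integral_mono[OF _ psiint])
      show "set_integrable lborel {r<..} (\<lambda>x. - (Fr x - F0 x))"
        using set_integrable_mult_right[of "-1" lborel "{r<..}" "\<lambda>x. Fr x - F0 x"] Dint by simp
      show "- (Fr x - F0 x) \<le> B * psi x" if "x \<in> {r<..}" for x
        using Dbound[of x] that by auto
    qed
    moreover have "(LINT x:{r<..}|lborel. - (Fr x - F0 x)) = - (LINT x:{r<..}|lborel. Fr x - F0 x)"
      using set_integral_mult_right[where a="-1::real" and A="{r<..}" and M=lborel and f="\<lambda>x. Fr x - F0 x"] by simp
    moreover have "(LINT x:{r<..}|lborel. B * psi x) = B * X / (2 - 2 * s)"
      using P(2) by (simp add: psi_def X_def)
    ultimately show ?thesis by linarith
  qed
  have F0r: "set_integrable lborel {r<..} F0"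
  proof -
    have "set_integrable lborel {r<..} (\<lambda>x. Fr x - (Fr x - F0 x))"
      using I1 Dint by (rule set_integral_diff)
    thus ?thesis by simp
  qed
  have Dval: "(LINT x:{r<..}|lborel. Fr x - F0 x) = (LINT x:{r<..}|lborel. Fr x) - (LINT x:{r<..}|lborel. F0 x)"
    using I1 F0r by (rule set_integral_diff)
  note Q2 = powr_int[OF s, of "2 * r"]
  have powint: "set_integrable lborel {0<..r} (\<lambda>x. B * x powr (1 - 2 * s))"
    by (rule set_integrable_mult_right, rule set_integrable_subset[OF Q2(1)]) (use r in auto)
  have powval: "(LINT x:{0<..r}|lborel. B * x powr (1 - 2 * s)) = B * X / (2 - 2 * s)"
  proof -
    have "(LINT x:{0<..r}|lborel. x powr (1 - 2 * s)) = (LBINT x=ereal 0..ereal r. x powr (1 - 2 * s))"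
      using r by (simp add: interval_integral_Ioc)
    also have "\<dots> = (LINT x:{0<..<r}|lborel. x powr (1 - 2 * s))"
      using r by (simp add: interval_integral_Ioo)
    also have "\<dots> = X / (2 - 2 * s)" using powr_int[OF s r] by (simp add: X_def)
    finally show ?thesis by simp
  qed
  have F0bound: "\<bar>F0 x\<bar> \<le> B * x powr (1 - 2 * s)" if x: "0 < x" for x
  proof -
    have "x powr (1 + 2 * s) = x * x powr (2 * s)" using x by (simp add: powr_add)
    moreover have "x powr (1 - 2 * s) = x / x powr (2 * s)" using x by (simp add: powr_diff)
    ultimately have e: "x\<^sup>2 / x powr (1 + 2 * s) = x powr (1 - 2 * s)"
      using x by (simp add: power2_eq_square)
    have "\<bar>F0 x\<bar> = \<bar>F x\<bar> / x powr (1 + 2 * s)" using x by (simp add: F0_def abs_divide)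
    also have "\<dots> \<le> B * x\<^sup>2 / x powr (1 + 2 * s)" using FB[OF x] x by (intro divide_right_mono) auto
    also have "\<dots> = B * (x\<^sup>2 / x powr (1 + 2 * s))" by simp
    also have "\<dots> = B * x powr (1 - 2 * s)" using e by simp
    finally show ?thesis .
  qed
  have F0l: "set_integrable lborel {0<..r} F0"
  proof (rule set_integrable_bound[OF powint])
    show "set_borel_measurable lborel {0<..r} F0"
      unfolding set_borel_measurable_def using F0m by measurable
    show "AE x in lborel. x \<in> {0<..r} \<longrightarrow> norm (F0 x) \<le> norm (B * x powr (1 - 2 * s))"
      by (rule AE_I2) (auto intro: order.trans[OF F0bound] abs_ge_self)
  qed
  have F0le: "\<bar>LINT x:{0<..r}|lborel. F0 x\<bar> \<le> B * X / (2 - 2 * s)"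
  proof -
    have "(LINT x:{0<..r}|lborel. F0 x) \<le> (LINT x:{0<..r}|lborel. B * x powr (1 - 2 * s))"
      by (rule set_integral_mono[OF F0l powint]) (use F0bound in force)
    moreover have "(LINT x:{0<..r}|lborel. - F0 x) \<le> (LINT x:{0<..r}|lborel. B * x powr (1 - 2 * s))"
    proof (rule set_integral_mono[OF _ powint])
      show "set_integrable lborel {0<..r} (\<lambda>x. - F0 x)"
        using set_integrable_mult_right[of "-1" lborel "{0<..r}" F0] F0l by simp
      show "- F0 x \<le> B * x powr (1 - 2 * s)" if "x \<in> {0<..r}" for x
        using F0bound[of x] that by auto
    qed
    moreover have "(LINT x:{0<..r}|lborel. - F0 x) = - (LINT x:{0<..r}|lborel. F0 x)"
      using set_integral_mult_right[where a="-1::real" and A="{0<..r}" and M=lborel and f=F0] by simp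
    ultimately show ?thesis using powval by linarith
  qed
  have U: "{0<..} = {0<..r} \<union> {r<..}" using r by auto
  have F0all: "set_integrable lborel {0<..} F0"
    unfolding U by (rule set_integrable_Un[OF F0l F0r]) auto
  have F0val: "(LINT x:{0<..}|lborel. F0 x) = (LINT x:{0<..r}|lborel. F0 x) + (LINT x:{r<..}|lborel. F0 x)"
    unfolding U by (rule set_integral_Un[OF _ F0l F0r]) auto
  show "set_integrable lborel {r<..} (\<lambda>\<rho>. F \<rho> / ((\<rho>\<^sup>2 - r\<^sup>2) powr s * \<rho>))"
    using I1 by (simp add: Fr_def)
  show "set_integrable lborel {0<..} (\<lambda>\<rho>. F \<rho> / \<rho> powr (1 + 2 * s))"
    using F0all by (simp add: F0_def)
  have "\<bar>(LINT x:{r<..}|lborel. Fr x) - (LINT x:{0<..}|lborel. F0 x)\<bar> \<le> B * X / (2 - 2 * s) + B * X / (2 - 2 * s)"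
    using Dle F0le Dval F0val by linarith
  also have "\<dots> = 2 * (B * X) / (2 * (1 - s))" by (simp add: add_divide_distrib[symmetric] algebra_simps)
  also have "\<dots> = B * X / (1 - s)" by (rule mult_divide_mult_cancel_left) simp
  finally show "\<bar>(LINT \<rho>:{r<..}|lborel. F \<rho> / ((\<rho>\<^sup>2 - r\<^sup>2) powr s * \<rho>))
       - (LINT \<rho>:{0<..}|lborel. F \<rho> / \<rho> powr (1 + 2 * s))\<bar> \<le> B * r powr (2 - 2 * s) / (1 - s)"
    by (simp add: Fr_def F0_def X_def)
qed



lemma delta_bound:
  fixes u :: "'a::euclidean_space \<Rightarrow> real"
  assumes "open \<Omega>" "C2_on \<Omega> u" "bounded (range u)" "x \<in> \<Omega>"
  shows "\<exists>C. \<forall>y. \<bar>delta_u u x y\<bar> \<le> C * (norm y)\<^sup>2"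
proof -
  obtain Du :: "'a \<Rightarrow> ('a \<Rightarrow>\<^sub>L real)" and D2u :: "'a \<Rightarrow> ('a \<Rightarrow>\<^sub>L ('a \<Rightarrow>\<^sub>L real))" where
    du: "\<And>z. z \<in> \<Omega> \<Longrightarrow> (u has_derivative blinfun_apply (Du z)) (at z)" and
    d2u: "\<And>z. z \<in> \<Omega> \<Longrightarrow> (Du has_derivative blinfun_apply (D2u z)) (at z)" and
    cont: "continuous_on \<Omega> D2u"
    using assms(2) unfolding C2_on_def by auto
  obtain e where e: "e > 0" "cball x e \<subseteq> \<Omega>" using assms(1,4) open_contains_cball by blast
  have "compact (D2u ` cball x e)"
    by (rule compact_continuous_image[OF continuous_on_subset[OF cont e(2)]]) simp
  then have "bounded (D2u ` cball x e)" by (rule compact_imp_bounded)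
  then obtain K where K0: "\<forall>w\<in>D2u ` cball x e. norm w \<le> K"
    unfolding bounded_iff by (elim exE) simp
  have K: "norm (D2u z) \<le> K" if "z \<in> cball x e" for z using K0 that by simp
  obtain M0 where M0: "\<forall>w\<in>range u. norm w \<le> M0"
    using assms(3) unfolding bounded_iff by (elim exE) simp
  have M: "\<bar>u z\<bar> \<le> M0" for z using M0 by auto
  have dD: "(Du has_derivative blinfun_apply (D2u w)) (at w within cball x e)" if "w \<in> cball x e" for w
  proof -
    have "w \<in> \<Omega>" using that e(2) by auto
    thus ?thesis by (rule has_derivative_at_withinI[OF d2u])
  qed
  have bD: "onorm (blinfun_apply (D2u w)) \<le> K" if "w \<in> cball x e" for w
    using K[OF that] norm_blinfun.rep_eq[of "D2u w"] by linarith
  have xc: "x \<in> cball x e" using e(1) by simp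
  have lip: "norm (Du z - Du x) \<le> K * norm (z - x)" if "z \<in> cball x e" for z
    by (rule differentiable_bound[OF convex_cball dD bD that xc])
  have near: "\<bar>delta_u u x y\<bar> \<le> 2 * K * (norm y)\<^sup>2" if y: "norm y \<le> e" for y
  proof -
    define t where "t = norm y"
    define \<phi> where "\<phi> = (\<lambda>z. u (x + z) + u (x - z))"
    have inO: "x + z \<in> \<Omega>" "x - z \<in> \<Omega>" "x + z \<in> cball x e" "x - z \<in> cball x e"
      if "z \<in> cball 0 t" for z
      using that y e(2) by (auto simp: t_def dist_norm)
    have der: "(\<phi> has_derivative blinfun_apply (Du (x + z) - Du (x - z))) (at z within cball 0 t)"
      if z: "z \<in> cball 0 t" for z
    proof -
      have d1: "((\<lambda>z. x + z) has_derivative (\<lambda>h. h)) (at z within cball 0 t)"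
        by (intro derivative_eq_intros) auto
      have d2: "((\<lambda>z. x - z) has_derivative (\<lambda>h. - h)) (at z within cball 0 t)"
        by (intro derivative_eq_intros) auto
      have "((\<lambda>z. u (x + z)) has_derivative (\<lambda>h. blinfun_apply (Du (x + z)) h)) (at z within cball 0 t)"
        using has_derivative_compose[OF d1 du[OF inO(1)[OF z]]] by simp
      moreover have "((\<lambda>z. u (x - z)) has_derivative (\<lambda>h. blinfun_apply (Du (x - z)) (- h))) (at z within cball 0 t)"
        using has_derivative_compose[OF d2 du[OF inO(2)[OF z]]] by simp
      ultimately have "(\<phi> has_derivative (\<lambda>h. blinfun_apply (Du (x + z)) h + blinfun_apply (Du (x - z)) (- h))) (at z within cball 0 t)"
        unfolding \<phi>_def by (rule has_derivative_add)
      moreover have "(\<lambda>h. blinfun_apply (Du (x + z)) h + blinfun_apply (Du (x - z)) (- h)) = blinfun_apply (Du (x + z) - Du (x - z))"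
        by (rule ext) (simp add: blinfun.minus_right blinfun.diff_left)
      ultimately show ?thesis by simp
    qed
    have bnd: "onorm (blinfun_apply (Du (x + z) - Du (x - z))) \<le> 2 * K * t" if z: "z \<in> cball 0 t" for z
    proof -
      have "norm (Du (x + z) - Du (x - z)) \<le> norm (Du (x + z) - Du x) + norm (Du (x - z) - Du x)"
      proof -
        have "Du (x + z) - Du (x - z) = (Du (x + z) - Du x) - (Du (x - z) - Du x)" by simp
        thus ?thesis by (metis norm_triangle_ineq4)
      qed
      also have "\<dots> \<le> K * norm z + K * norm z"
        using lip[OF inO(3)[OF z]] lip[OF inO(4)[OF z]] by (intro add_mono) auto
      also have "\<dots> \<le> 2 * K * t"
      proof -
        have "norm (D2u x) \<le> K" using K e(1) by simp
        then have "K \<ge> 0" using norm_ge_zero order_trans by blast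
        thus ?thesis using z by (auto intro: mult_left_mono)
      qed
      finally show ?thesis by (simp add: norm_blinfun.rep_eq)
    qed
    have "norm (\<phi> y - \<phi> 0) \<le> 2 * K * t * norm (y - 0)"
      by (rule differentiable_bound[OF convex_cball der bnd]) (auto simp: t_def)
    moreover have "delta_u u x y = \<phi> 0 - \<phi> y" by (simp add: delta_u_def \<phi>_def)
    ultimately show ?thesis by (simp add: t_def power2_eq_square abs_minus_commute mult_ac)
  qed
  define C where "C = max (2 * K) (4 * M0 / e\<^sup>2)"
  have "\<bar>delta_u u x y\<bar> \<le> C * (norm y)\<^sup>2" for y
  proof (cases "norm y \<le> e")
    case True
    have "2 * K * (norm y)\<^sup>2 \<le> C * (norm y)\<^sup>2" by (intro mult_right_mono) (auto simp: C_def)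
    then show ?thesis using near[OF True] by linarith
  next
    case False
    have "\<bar>delta_u u x y\<bar> \<le> 4 * M0" unfolding delta_u_def using M[of x] M[of "x - y"] M[of "x + y"] by linarith
    also have "\<dots> = (4 * M0 / e\<^sup>2) * e\<^sup>2" using e by simp
    also have "\<dots> \<le> (4 * M0 / e\<^sup>2) * (norm y)\<^sup>2"
      using False e M[of x] by (intro mult_left_mono power_mono) auto
    also have "\<dots> \<le> C * (norm y)\<^sup>2" by (intro mult_right_mono) (auto simp: C_def)
    finally show ?thesis .
  qed
  thus ?thesis by blast
qed



theorem theorem2p2:
  fixes s :: real and a :: "'a::euclidean_space measure"
    and \<Omega> :: "'a set" and u :: "'a \<Rightarrow> real" and x :: 'a
  assumes "0 < s" "s < 1"
    and "spectral_measure a"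
    and "open \<Omega>"
    and "C2_on \<Omega> u"
    and "u \<in> borel_measurable borel" "bounded (range u)"
    and "x \<in> \<Omega>"
  shows "(\<lambda>r. u x - Mop s a r u x - cnsa s a * r powr (2 * s) * Lop s a u x)
           \<in> O[at_right 0](\<lambda>r. r\<^sup>2)"
proof -
  have s: "0 < s" "s < 1" by fact+
  have sets_a: "sets a = sets (restrict_space borel (sphere (0::'a) 1))"
    and fin: "finite_measure a" and pos: "0 < emeasure a (space a)"
    using assms(3) unfolding spectral_measure_def by auto
  interpret finite_measure a by (rule fin)
  have space_a: "space a = sphere 0 1"
    using sets_eq_imp_space_eq[OF sets_a] by (simp add: space_restrict_space)
  define A where "A = measure a (space a)"
  have Apos: "A > 0" using pos by (simp add: A_def emeasure_eq_measure)
  have [measurable]: "u \<in> borel_measurable borel" by fact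
  have idm [measurable]: "(\<lambda>\<omega>. \<omega>) \<in> measurable a borel"
    by (subst measurable_cong_sets[OF sets_a refl]) (rule measurable_restrict_space1, simp)
  obtain C where C: "\<And>y. \<bar>delta_u u x y\<bar> \<le> C * (norm y)\<^sup>2"
    using delta_bound[OF assms(4,5,7,8)] by blast
  obtain M0 where M0: "\<forall>w\<in>range u. norm w \<le> M0"
    using assms(7) unfolding bounded_iff by (elim exE) simp
  have M: "\<bar>u z\<bar> \<le> M0" for z using M0 by auto
  have dbound: "\<bar>delta_u u x y\<bar> \<le> 4 * M0" for y
    unfolding delta_u_def using M[of x] M[of "x - y"] M[of "x + y"] by linarith
  define F where "F = (\<lambda>\<rho>::real. \<integral>\<omega>. delta_u u x (\<rho> *\<^sub>R \<omega>) \<partial>a)"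
  have joint: "(\<lambda>(\<rho>::real, \<omega>). delta_u u x (\<rho> *\<^sub>R \<omega>)) \<in> borel_measurable (borel \<Otimes>\<^sub>M a)"
    unfolding delta_u_def by measurable
  have Fm: "F \<in> borel_measurable borel"
    unfolding F_def by (rule borel_measurable_lebesgue_integral) (use joint in simp)
  have dint: "integrable a (\<lambda>\<omega>. delta_u u x (\<rho> *\<^sub>R \<omega>))" for \<rho>
    by (rule integrable_const_bound[where B="4 * M0"]) (use dbound in \<open>auto simp: delta_u_def\<close>)
  have Cnn: "C \<ge> 0"
  proof -
    obtain w :: 'a where "norm w = 1" using vector_choose_size[of 1] by auto
    thus ?thesis using C[of w] by simp
  qed
  have FB: "\<bar>F \<rho>\<bar> \<le> (A * C) * \<rho>\<^sup>2" if "\<rho> > 0" for \<rho>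
  proof -
    have "\<bar>F \<rho>\<bar> \<le> (\<integral>\<omega>. \<bar>delta_u u x (\<rho> *\<^sub>R \<omega>)\<bar> \<partial>a)"
      unfolding F_def by (rule integral_abs_bound)
    also have "\<dots> \<le> (\<integral>\<omega>. C * \<rho>\<^sup>2 \<partial>a)"
    proof (rule integral_mono)
      show "integrable a (\<lambda>\<omega>. \<bar>delta_u u x (\<rho> *\<^sub>R \<omega>)\<bar>)" using dint by (rule integrable_abs)
      show "integrable a (\<lambda>\<omega>. C * \<rho>\<^sup>2)" by simp
      show "\<bar>delta_u u x (\<rho> *\<^sub>R \<omega>)\<bar> \<le> C * \<rho>\<^sup>2" if "\<omega> \<in> space a" for \<omega>
        using C[of "\<rho> *\<^sub>R \<omega>"] that \<open>\<rho> > 0\<close> by (simp add: space_a)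
    qed
    also have "\<dots> = (A * C) * \<rho>\<^sup>2" by (simp add: A_def)
    finally show ?thesis .
  qed
  have FB': "\<bar>F \<rho>\<bar> \<le> A * (4 * M0)" for \<rho>
  proof -
    have "\<bar>F \<rho>\<bar> \<le> (\<integral>\<omega>. \<bar>delta_u u x (\<rho> *\<^sub>R \<omega>)\<bar> \<partial>a)"
      unfolding F_def by (rule integral_abs_bound)
    also have "\<dots> \<le> (\<integral>\<omega>. 4 * M0 \<partial>a)"
      by (rule integral_mono) (use dint dbound in auto)
    also have "\<dots> = A * (4 * M0)" by (simp add: A_def)
    finally show ?thesis .
  qed
  have Lop_eq: "Lop s a u x = (LINT \<rho>:{0<..}|lborel. F \<rho> / \<rho> powr (1 + 2 * s))"
    by (simp add: Lop_def F_def)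
  have G_eq: "(\<integral>\<omega>. u (x + \<rho> *\<^sub>R \<omega>) + u (x - \<rho> *\<^sub>R \<omega>) \<partial>a) = 2 * u x * A - F \<rho>" for \<rho>
  proof -
    have "(\<integral>\<omega>. u (x + \<rho> *\<^sub>R \<omega>) + u (x - \<rho> *\<^sub>R \<omega>) \<partial>a) = (\<integral>\<omega>. 2 * u x - delta_u u x (\<rho> *\<^sub>R \<omega>) \<partial>a)"
      by (simp add: delta_u_def add.commute)
    also have "\<dots> = (\<integral>\<omega>. 2 * u x \<partial>a) - F \<rho>"
      unfolding F_def by (rule Bochner_Integration.integral_diff[OF integrable_const dint])
    finally show ?thesis by (simp add: A_def)
  qed
  define c where "c = cnsa s a"
  have cpos: "c > 0"
  proof -
    have "sin (pi * s) > 0" using s by (intro sin_gt_zero) auto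
    thus ?thesis using Apos by (simp add: c_def cnsa_def A_def)
  qed
  have main: "\<bar>u x - Mop s a r u x - cnsa s a * r powr (2 * s) * Lop s a u x\<bar> \<le> (c * (A * C) / (1 - s)) * r\<^sup>2"
    if r: "r > 0" for r
  proof -
    note co = core[OF Fm FB FB' s r]
    note K = K_integral[OF s r]
    define D where "D = (\<lambda>\<rho>. (\<rho>\<^sup>2 - r\<^sup>2) powr s * \<rho>)"
    define I where "I = (LINT \<rho>:{r<..}|lborel. F \<rho> / D \<rho>)"
    define L where "L = (LINT \<rho>:{0<..}|lborel. F \<rho> / \<rho> powr (1 + 2 * s))"
    define J where "J = (LINT \<rho>:{r<..}|lborel. 1 / D \<rho>)"
    have Jv: "J = r powr (- (2 * s)) * pi / (2 * sin (pi * s))" using K(2) by (simp add: J_def D_def)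
    have Mop_eq: "Mop s a r u x = c * r powr (2 * s) * (LINT \<rho>:{r<..}|lborel. (2 * u x * A - F \<rho>) / D \<rho>)"
      by (simp add: Mop_def G_eq c_def D_def)
    have "(LINT \<rho>:{r<..}|lborel. (2 * u x * A - F \<rho>) / D \<rho>)
        = (LINT \<rho>:{r<..}|lborel. (2 * u x * A) * (1 / D \<rho>) - F \<rho> / D \<rho>)"
      by (simp add: diff_divide_distrib)
    also have "\<dots> = (2 * u x * A) * J - I"
    proof -
      have i1: "set_integrable lborel {r<..} (\<lambda>\<rho>. (2 * u x * A) * (1 / D \<rho>))"
        using K(1) unfolding D_def by (rule set_integrable_mult_right)
      have i2: "set_integrable lborel {r<..} (\<lambda>\<rho>. F \<rho> / D \<rho>)" using co(1) by (simp add: D_def)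
      have "(LINT \<rho>:{r<..}|lborel. (2 * u x * A) * (1 / D \<rho>)) = (2 * u x * A) * J"
        unfolding J_def by (rule set_integral_mult_right)
      then show ?thesis using set_integral_diff(2)[OF i1 i2] by (simp only: I_def)
    qed
    finally have Mv: "Mop s a r u x = c * r powr (2 * s) * ((2 * u x * A) * J - I)" using Mop_eq by simp
    have one: "c * r powr (2 * s) * (2 * A * J) = 1"
    proof -
      have "sin (pi * s) > 0" using s by (intro sin_gt_zero) auto
      moreover have "r powr (2 * s) * r powr (- (2 * s)) = 1" using r by (simp flip: powr_add)
      ultimately show ?thesis using Apos
        by (simp add: c_def cnsa_def A_def[symmetric] Jv field_simps)
    qed
    have eq: "u x - Mop s a r u x - cnsa s a * r powr (2 * s) * Lop s a u x = c * r powr (2 * s) * (I - L)"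
    proof -
      have "u x - Mop s a r u x - cnsa s a * r powr (2 * s) * Lop s a u x
          = u x * (1 - c * r powr (2 * s) * (2 * A * J)) + c * r powr (2 * s) * (I - L)"
        by (simp add: Mv Lop_eq L_def c_def algebra_simps)
      thus ?thesis using one by simp
    qed
    have IL: "\<bar>I - L\<bar> \<le> (A * C) * r powr (2 - 2 * s) / (1 - s)"
      using co(3) by (simp add: I_def L_def D_def)
    have "\<bar>c * r powr (2 * s) * (I - L)\<bar> = c * r powr (2 * s) * \<bar>I - L\<bar>"
      using cpos by (simp add: abs_mult)
    also have "\<dots> \<le> c * r powr (2 * s) * ((A * C) * r powr (2 - 2 * s) / (1 - s))"
      using IL cpos by (intro mult_left_mono) auto
    also have "\<dots> = (c * (A * C) / (1 - s)) * (r powr (2 * s) * r powr (2 - 2 * s))" by simp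
    also have "r powr (2 * s) * r powr (2 - 2 * s) = r\<^sup>2"
      using r by (simp flip: powr_add add: powr_numeral)
    finally show ?thesis using eq by simp
  qed
  show ?thesis
  proof (rule bigoI[where c="c * (A * C) / (1 - s)"])
    show "\<forall>\<^sub>F r in at_right 0. norm (u x - Mop s a r u x - cnsa s a * r powr (2 * s) * Lop s a u x) \<le> c * (A * C) / (1 - s) * norm (r\<^sup>2)"
      using eventually_at_right_less[of "0::real"] by (rule eventually_mono) (use main in auto)
  qed
qed

end
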